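(* Let $d\ge1$ and let $\mu=\prod_{i=1}^d\mu_i$ be a product probability measure on $\mathbb{R}^d$, where for each $i$, $\mathrm{d}\mu_i(x_i)=\rho_i(|x_i|)\,\mathrm{d}x_i$ is a probability measure on $\mathbb{R}$ with $\rho_i:[0,\infty)\to(0,\infty)$ continuous. Let $a_1,\dots,a_d>0$ and $B=\{x\in\mathbb{R}^d: \sum_{i=1}^d x_i^2/a_i^2\le1\}$. Then for every $f\in\bar{\mathcal{C}}_d$, $$\int_{\mathbb{R}^d} f\,\mathbf{1}_B\,\mathrm{d}\mu\ \ge\ \Big(\int_{\mathbb{R}^d} f\,\mathrm{d}\mu\Big)\,\mu(B).$$
   Context: $\mathcal{C}_1$ denotes the set of continuous compactly supported functions $g:\mathbb{R}\to[0,\infty)$ such that for every $c>0$ the set $\{t: g(t)>c\}$ is convex (an interval), and $g(t)\le g(0)$ for all $t\in\mathbb{R}$. $\bar{\mathcal{C}}_d$ denotes the set of continuous compactly supported functions $f:\mathbb{R}^d\to[0,\infty)$ such that for every $i\in\{1,\dots,d\}$ and every fixed choice of the other coordinates $(x_1,\dots,x_{i-1},x_{i+1},\dots,x_d)\in\mathbb{R}^{d-1}$, the one-variable function $x_i\mapsto f(x_1,\dots,x_{i-1},x_i,x_{i+1},\dots,x_d)$ belongs to $\mathcal{C}_1$. *)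

theory Defs
  imports "HOL-Analysis.Analysis"
begin

definition C1 :: "(real \<Rightarrow> real) set" where
  "C1 = {g. continuous_on UNIV g \<and> compact (closure {t. g t \<noteq> 0}) \<and>
            (\<forall>t. 0 \<le> g t) \<and> (\<forall>c>0. convex {t. g t > c}) \<and> (\<forall>t. g t \<le> g 0)}"

definition upd_coord :: "real^'n \<Rightarrow> 'n \<Rightarrow> real \<Rightarrow> real^'n" where
  "upd_coord x i t = (\<chi> j. if j = i then t else x $ j)"

definition Cbar :: "(real^'n \<Rightarrow> real) set" where
  "Cbar = {f. continuous_on UNIV f \<and> compact (closure {x. f x \<noteq> 0}) \<and>
             (\<forall>x. 0 \<le> f x) \<and> (\<forall>i x. (\<lambda>t. f (upd_coord x i t)) \<in> C1)}"

text \<open>Product measure on R^d whose i-th factor is d mu_i = rho_i(|t|) dt: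
  it is Lebesgue measure with the product density.\<close>
definition prod_meas :: "('n::finite \<Rightarrow> real \<Rightarrow> real) \<Rightarrow> (real^'n) measure" where
  "prod_meas \<rho> = density lborel (\<lambda>x. ennreal (\<Prod>i\<in>UNIV. \<rho> i \<bar>x $ i\<bar>))"

definition ellipsoid :: "('n::finite \<Rightarrow> real) \<Rightarrow> (real^'n) set" where
  "ellipsoid a = {x. (\<Sum>i\<in>UNIV. (x $ i)^2 / (a i)^2) \<le> 1}"

end

theory Submission
  imports Defs "HOL-Probability.Probability"
begin

lemma cheb:
  fixes u v :: "'a \<Rightarrow> real"
  assumes P: "prob_space M"
    and um[measurable]: "u \<in> borel_measurable M" and vm[measurable]: "v \<in> borel_measurable M"
    and ub: "\<And>x. \<bar>u x\<bar> \<le> Cu" and vb: "\<And>x. \<bar>v x\<bar> \<le> Cv"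
    and uv: "\<And>s t. 0 \<le> (u s - u t) * (v s - v t)"
  shows "(\<integral>x. u x \<partial>M) * (\<integral>x. v x \<partial>M) \<le> (\<integral>x. u x * v x \<partial>M)"
proof -
  have F: "finite_measure M" using P by (simp add: prob_space_def)
  have one: "measure M (space M) = 1" using P by (simp add: prob_space.prob_space)
  have ic: "integrable M (\<lambda>x. c)" for c :: real using finite_measure.integrable_const[OF F] .
  have iu: "integrable M u" by (rule finite_measure.integrable_const_bound[OF F, where B=Cu]) (use ub in auto)
  have iv: "integrable M v" by (rule finite_measure.integrable_const_bound[OF F, where B=Cv]) (use vb in auto)
  have iuv: "integrable M (\<lambda>x. u x * v x)"
    by (rule finite_measure.integrable_const_bound[OF F, where B="Cu*Cv"])
       (auto simp: abs_mult intro!: mult_mono ub vb order_trans[OF abs_ge_zero ub])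
  define U where "U = (\<integral>x. u x \<partial>M)"
  define V where "V = (\<integral>x. v x \<partial>M)"
  define W where "W = (\<integral>x. u x * v x \<partial>M)"
  have inner: "(\<integral>t. (u s - u t) * (v s - v t) \<partial>M) = u s * v s - u s * V - v s * U + W" for s
  proof -
    have "(\<lambda>t. (u s - u t) * (v s - v t)) = (\<lambda>t. (u s * v s + u t * v t) - (u s * v t + v s * u t))"
      by (auto simp: algebra_simps)
    then have "(\<integral>t. (u s - u t) * (v s - v t) \<partial>M) = (\<integral>t. (u s * v s + u t * v t) - (u s * v t + v s * u t) \<partial>M)"
      by simp
    also have "\<dots> = u s * v s + W - (u s * V + v s * U)"
      using iu iv iuv ic by (simp add: U_def V_def W_def one)
    finally show ?thesis by simp
  qed
  have "0 \<le> (\<integral>s. (\<integral>t. (u s - u t) * (v s - v t) \<partial>M) \<partial>M)"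
    by (auto intro!: Bochner_Integration.integral_nonneg uv)
  also have "\<dots> = (\<integral>s. u s * v s - u s * V - v s * U + W \<partial>M)"
    by (simp add: inner)
  also have "\<dots> = W - U * V - V * U + W"
    using iu iv iuv ic by (simp add: U_def V_def W_def one)
  finally show ?thesis unfolding U_def V_def W_def by (simp add: algebra_simps)
qed

lemma oneD:
  fixes f g :: "real \<Rightarrow> real"
  assumes P: "prob_space M" and sM: "sets M = sets borel" and sym: "distr M borel uminus = M"
    and fm[measurable]: "f \<in> borel_measurable borel" and gm[measurable]: "g \<in> borel_measurable borel"
    and fb: "\<And>x. \<bar>f x\<bar> \<le> Cf" and gb: "\<And>x. \<bar>g x\<bar> \<le> Cg"
    and gsym: "\<And>t. g (-t) = g t" and gmono: "\<And>s t. 0 \<le> s \<Longrightarrow> s \<le> t \<Longrightarrow> g t \<le> g s"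
    and fdec: "\<And>s t. 0 \<le> s \<Longrightarrow> s \<le> t \<Longrightarrow> f t \<le> f s"
    and finc: "\<And>s t. s \<le> t \<Longrightarrow> t \<le> 0 \<Longrightarrow> f s \<le> f t"
  shows "(\<integral>x. f x \<partial>M) * (\<integral>x. g x \<partial>M) \<le> (\<integral>x. f x * g x \<partial>M)"
proof -
  have F: "finite_measure M" using P by (simp add: prob_space_def)
  have mc: "\<And>h. h \<in> borel_measurable borel \<Longrightarrow> h \<in> borel_measurable M"
    using sM measurable_cong_sets by blast
  have um: "uminus \<in> measurable M borel" using mc[of uminus] by simp
  have refl: "(\<integral>x. h (- x) \<partial>M) = (\<integral>x. h x \<partial>M)" if hm: "h \<in> borel_measurable borel" for h :: "real \<Rightarrow> real"
  proof -
    have "(\<integral>x. h x \<partial>M) = (\<integral>x. h x \<partial>distr M borel uminus)" using sym by simp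
    also have "\<dots> = (\<integral>x. h (- x) \<partial>M)" by (rule integral_distr[OF um hm])
    finally show ?thesis by simp
  qed
  define fs where "fs t = (f t + f (-t)) / 2" for t
  have fsm: "fs \<in> borel_measurable borel" unfolding fs_def by measurable
  have ifg: "integrable M (\<lambda>x. f x * g x)"
    by (rule finite_measure.integrable_const_bound[OF F, where B="Cf*Cg"])
       (auto simp: abs_mult intro!: mult_mono fb gb order_trans[OF abs_ge_zero fb] mc)
  have ifg': "integrable M (\<lambda>x. f (-x) * g x)"
    by (rule finite_measure.integrable_const_bound[OF F, where B="Cf*Cg"])
       (auto simp: abs_mult intro!: mult_mono fb gb order_trans[OF abs_ge_zero fb] mc)
  have iff: "integrable M f"
    by (rule finite_measure.integrable_const_bound[OF F, where B="Cf"]) (auto intro!: fb mc)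
  have iff': "integrable M (\<lambda>x. f (-x))"
    by (rule finite_measure.integrable_const_bound[OF F, where B="Cf"]) (auto intro!: fb mc)
  have e1: "(\<integral>x. f (-x) * g x \<partial>M) = (\<integral>x. f x * g x \<partial>M)"
    using refl[of "\<lambda>x. f x * g x"] by (simp add: gsym)
  have e2: "(\<integral>x. f (-x) \<partial>M) = (\<integral>x. f x \<partial>M)"
    using refl[of f] by simp
  have E1: "(\<integral>x. fs x * g x \<partial>M) = (\<integral>x. f x * g x \<partial>M)"
  proof -
    have "(\<integral>x. fs x * g x \<partial>M) = (\<integral>x. (f x * g x + f (-x) * g x) / 2 \<partial>M)"
      by (simp add: fs_def algebra_simps add_divide_distrib)
    also have "\<dots> = ((\<integral>x. f x * g x \<partial>M) + (\<integral>x. f (-x) * g x \<partial>M)) / 2"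
      using ifg ifg' by simp
    finally show ?thesis using e1 by simp
  qed
  have E2: "(\<integral>x. fs x \<partial>M) = (\<integral>x. f x \<partial>M)"
  proof -
    have "(\<integral>x. fs x \<partial>M) = ((\<integral>x. f x \<partial>M) + (\<integral>x. f (-x) \<partial>M)) / 2"
      unfolding fs_def using iff iff' by simp
    then show ?thesis using e2 by simp
  qed
  have fsabs: "fs t = fs \<bar>t\<bar>" for t unfolding fs_def by (cases "t \<ge> 0") auto
  have gabs: "g t = g \<bar>t\<bar>" for t using gsym[of t] by (cases "t \<ge> 0") auto
  have fsmono: "fs t \<le> fs s" if "0 \<le> s" "s \<le> t" for s t
    unfolding fs_def using fdec[OF that] finc[of "-t" "-s"] that by auto
  have key: "0 \<le> (fs s - fs t) * (g s - g t)" for s t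
  proof (cases "\<bar>s\<bar> \<le> \<bar>t\<bar>")
    case True
    then have "fs t \<le> fs s" "g t \<le> g s"
      using fsmono[of "\<bar>s\<bar>" "\<bar>t\<bar>"] gmono[of "\<bar>s\<bar>" "\<bar>t\<bar>"] fsabs[of s] fsabs[of t] gabs[of s] gabs[of t]
      by auto
    then show ?thesis by (intro mult_nonneg_nonneg) auto
  next
    case False
    then have "fs s \<le> fs t" "g s \<le> g t"
      using fsmono[of "\<bar>t\<bar>" "\<bar>s\<bar>"] gmono[of "\<bar>t\<bar>" "\<bar>s\<bar>"] fsabs[of s] fsabs[of t] gabs[of s] gabs[of t]
      by auto
    then show ?thesis by (intro mult_nonpos_nonpos) auto
  qed
  have fsb: "\<bar>fs x\<bar> \<le> Cf" for x
    unfolding fs_def using fb[of x] fb[of "-x"] by auto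
  have "(\<integral>x. fs x \<partial>M) * (\<integral>x. g x \<partial>M) \<le> (\<integral>x. fs x * g x \<partial>M)"
    by (rule cheb[OF P mc[OF fsm] mc[OF gm] fsb gb key])
  then show ?thesis using E1 E2 by simp
qed

lemma int_bdd:
  fixes h :: "'a \<Rightarrow> real"
  assumes P: "prob_space N" and hm: "h \<in> borel_measurable N" and hb: "\<And>x. x \<in> space N \<Longrightarrow> \<bar>h x\<bar> \<le> C"
  shows "integrable N h"
proof -
  have F: "finite_measure N" using P by (simp add: prob_space_def)
  show ?thesis by (rule finite_measure.integrable_const_bound[OF F, where B=C]) (use hb hm in auto)
qed

lemma int_bound:
  fixes h :: "'a \<Rightarrow> real"
  assumes P: "prob_space N" and hm: "h \<in> borel_measurable N" and hb: "\<And>x. x \<in> space N \<Longrightarrow> \<bar>h x\<bar> \<le> C"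
  shows "\<bar>\<integral>x. h x \<partial>N\<bar> \<le> C"
proof -
  have F: "finite_measure N" using P by (simp add: prob_space_def)
  have "\<bar>\<integral>x. h x \<partial>N\<bar> \<le> (\<integral>x. \<bar>h x\<bar> \<partial>N)"
    using integral_norm_bound[of N h] by simp
  also have "\<dots> \<le> (\<integral>x. C \<partial>N)"
    by (rule Bochner_Integration.integral_mono[OF _ finite_measure.integrable_const[OF F] hb])
       (use int_bdd[OF P hm hb] in auto)
  also have "\<dots> = C" using prob_space.prob_space[OF P] by simp
  finally show ?thesis .
qed

lemma harris:
  fixes M :: "'i \<Rightarrow> real measure" and F G :: "('i \<Rightarrow> real) \<Rightarrow> real"
  assumes P: "\<And>i. prob_space (M i)" and sM: "\<And>i. sets (M i) = sets borel"
    and sym: "\<And>i. distr (M i) borel uminus = M i"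
    and fin: "finite I"
  shows "\<lbrakk>F \<in> borel_measurable (PiM I M); G \<in> borel_measurable (PiM I M);
     \<And>x. x \<in> space (PiM I M) \<Longrightarrow> \<bar>F x\<bar> \<le> CF;
     \<And>x. x \<in> space (PiM I M) \<Longrightarrow> \<bar>G x\<bar> \<le> CG;
     \<And>i x s t. i \<in> I \<Longrightarrow> x \<in> space (PiM I M) \<Longrightarrow> 0 \<le> s \<Longrightarrow> s \<le> t \<Longrightarrow> F (x(i:=t)) \<le> F (x(i:=s));
     \<And>i x s t. i \<in> I \<Longrightarrow> x \<in> space (PiM I M) \<Longrightarrow> s \<le> t \<Longrightarrow> t \<le> 0 \<Longrightarrow> F (x(i:=s)) \<le> F (x(i:=t));
     \<And>i x t. i \<in> I \<Longrightarrow> x \<in> space (PiM I M) \<Longrightarrow> G (x(i:=-t)) = G (x(i:=t));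
     \<And>i x s t. i \<in> I \<Longrightarrow> x \<in> space (PiM I M) \<Longrightarrow> 0 \<le> s \<Longrightarrow> s \<le> t \<Longrightarrow> G (x(i:=t)) \<le> G (x(i:=s))\<rbrakk>
    \<Longrightarrow> (\<integral>x. F x \<partial>PiM I M) * (\<integral>x. G x \<partial>PiM I M) \<le> (\<integral>x. F x * G x \<partial>PiM I M)"
  using fin
proof (induction I arbitrary: F G CF CG rule: finite_induct)
  case empty
  then show ?case by (simp add: PiM_empty lebesgue_integral_count_space_finite)
next
  case (insert i I)
  have PSF: "product_sigma_finite M"
    unfolding product_sigma_finite_def using P prob_space_imp_sigma_finite by blast
  have PP: "prob_space (PiM I M)" by (rule prob_space_PiM) (use P in auto)
  have PQ: "prob_space (PiM (insert i I) M)" by (rule prob_space_PiM) (use P in auto)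
  have SFi: "sigma_finite_measure (M i)" using P prob_space_imp_sigma_finite by blast
  have spM: "space (M j) = UNIV" for j using sets_eq_imp_space_eq[OF sM[of j]] by simp
  have spQ: "x \<in> space (PiM I M) \<Longrightarrow> x(i:=y) \<in> space (PiM (insert i I) M)" for x y
    by (auto simp: space_PiM spM PiE_def extensional_def)
  have spP: "x \<in> space (PiM I M) \<Longrightarrow> j \<in> I \<Longrightarrow> x(j:=y) \<in> space (PiM I M)" for x y j
    by (auto simp: space_PiM spM PiE_def extensional_def)
  have slice: "(\<lambda>y. h (x(i:=y))) \<in> borel_measurable borel"
    if hm: "h \<in> borel_measurable (PiM (insert i I) M)" and x: "x \<in> space (PiM I M)" for h :: "_ \<Rightarrow> real" and x
  proof -
    have "(\<lambda>y. h (x(i:=y))) \<in> borel_measurable (M i)"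
      using measurable_comp[OF measurable_component_update[OF x insert(2)] hm] by (simp add: comp_def)
    then show ?thesis using sM[of i] measurable_cong_sets by blast
  qed
  have slicei: "(\<lambda>y. h (x(i:=y))) \<in> borel_measurable (M i)"
    if hm: "h \<in> borel_measurable (PiM (insert i I) M)" and x: "x \<in> space (PiM I M)" for h :: "_ \<Rightarrow> real" and x
    using measurable_comp[OF measurable_component_update[OF x insert(2)] hm] by (simp add: comp_def)
  have intm: "(\<lambda>x. \<integral>y. h (x(i:=y)) \<partial>M i) \<in> borel_measurable (PiM I M)"
    if hm: "h \<in> borel_measurable (PiM (insert i I) M)" for h :: "_ \<Rightarrow> real"
  proof (rule sigma_finite_measure.borel_measurable_lebesgue_integral[OF SFi])
    show "(\<lambda>(x, y). h (x(i := y))) \<in> borel_measurable (PiM I M \<Otimes>\<^sub>M M i)"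
      using measurable_comp[OF measurable_add_dim hm] by (simp add: comp_def case_prod_beta')
  qed
  note Fm = insert.prems(1) and Gm = insert.prems(2)
  define Ft where "Ft x = (\<integral>y. F (x(i:=y)) \<partial>M i)" for x
  define Gt where "Gt x = (\<integral>y. G (x(i:=y)) \<partial>M i)" for x
  define Ht where "Ht x = (\<integral>y. F (x(i:=y)) * G (x(i:=y)) \<partial>M i)" for x
  have FGm: "(\<lambda>x. F x * G x) \<in> borel_measurable (PiM (insert i I) M)" by (intro borel_measurable_times Fm Gm)
  have FGb: "\<bar>F x * G x\<bar> \<le> CF * CG" if "x \<in> space (PiM (insert i I) M)" for x
    using insert.prems(3,4)[OF that] by (auto simp: abs_mult intro!: mult_mono order_trans[OF abs_ge_zero])
  have Ftm: "Ft \<in> borel_measurable (PiM I M)" unfolding Ft_def by (rule intm[OF Fm])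
  have Gtm: "Gt \<in> borel_measurable (PiM I M)" unfolding Gt_def by (rule intm[OF Gm])
  have Htm: "Ht \<in> borel_measurable (PiM I M)" unfolding Ht_def by (rule intm[OF FGm])
  have Ftb: "\<bar>Ft x\<bar> \<le> CF" if "x \<in> space (PiM I M)" for x
    unfolding Ft_def by (rule int_bound[OF P slicei[OF Fm that]]) (rule insert.prems(3), rule spQ[OF that])
  have Gtb: "\<bar>Gt x\<bar> \<le> CG" if "x \<in> space (PiM I M)" for x
    unfolding Gt_def by (rule int_bound[OF P slicei[OF Gm that]]) (rule insert.prems(4), rule spQ[OF that])
  have Htb: "\<bar>Ht x\<bar> \<le> CF * CG" if "x \<in> space (PiM I M)" for x
    unfolding Ht_def by (rule int_bound[OF P slicei[OF FGm that]]) (rule FGb, rule spQ[OF that])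
  have eF: "(\<integral>x. F x \<partial>PiM (insert i I) M) = (\<integral>x. Ft x \<partial>PiM I M)"
    unfolding Ft_def
    by (rule product_sigma_finite.product_integral_insert[OF PSF insert(1,2)])
       (rule int_bdd[OF PQ Fm insert.prems(3)])
  have eG: "(\<integral>x. G x \<partial>PiM (insert i I) M) = (\<integral>x. Gt x \<partial>PiM I M)"
    unfolding Gt_def
    by (rule product_sigma_finite.product_integral_insert[OF PSF insert(1,2)])
       (rule int_bdd[OF PQ Gm insert.prems(4)])
  have eH: "(\<integral>x. F x * G x \<partial>PiM (insert i I) M) = (\<integral>x. Ht x \<partial>PiM I M)"
    unfolding Ht_def
    by (rule product_sigma_finite.product_integral_insert[OF PSF insert(1,2)])
       (rule int_bdd[OF PQ FGm FGb])
  have step1: "Ft x * Gt x \<le> Ht x" if x: "x \<in> space (PiM I M)" for x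
    unfolding Ft_def Gt_def Ht_def
  proof (rule oneD[OF P sM sym slice[OF Fm x] slice[OF Gm x]])
    show "\<bar>F (x(i := y))\<bar> \<le> CF" for y using insert.prems(3) spQ[OF x] by auto
    show "\<bar>G (x(i := y))\<bar> \<le> CG" for y using insert.prems(4) spQ[OF x] by auto
    have xx: "x(i:=0) \<in> space (PiM (insert i I) M)" by (rule spQ[OF x])
    have uu: "\<And>t. x(i:=0, i:=t) = x(i:=t)" by simp
    show "G (x(i := - t)) = G (x(i := t))" for t
      using insert.prems(7)[OF insertI1 xx, of t] unfolding uu .
    show "G (x(i := t)) \<le> G (x(i := s))" if "0 \<le> s" "s \<le> t" for s t
      using insert.prems(8)[OF insertI1 xx that] unfolding uu .
    show "F (x(i := t)) \<le> F (x(i := s))" if "0 \<le> s" "s \<le> t" for s t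
      using insert.prems(5)[OF insertI1 xx that] unfolding uu .
    show "F (x(i := s)) \<le> F (x(i := t))" if "s \<le> t" "t \<le> 0" for s t
      using insert.prems(6)[OF insertI1 xx that] unfolding uu .
  qed
  have FtGtm: "(\<lambda>x. Ft x * Gt x) \<in> borel_measurable (PiM I M)" by (intro borel_measurable_times Ftm Gtm)
  have step2: "(\<integral>x. Ft x * Gt x \<partial>PiM I M) \<le> (\<integral>x. Ht x \<partial>PiM I M)"
  proof (rule Bochner_Integration.integral_mono[OF _ _ step1])
    show "integrable (PiM I M) (\<lambda>x. Ft x * Gt x)"
      by (rule int_bdd[OF PP FtGtm, where C="CF*CG"])
         (use Ftb Gtb in \<open>auto simp: abs_mult intro!: mult_mono order_trans[OF abs_ge_zero]\<close>)
    show "integrable (PiM I M) Ht" by (rule int_bdd[OF PP Htm Htb])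
  qed
  have swap: "x(j:=t, i:=y) = x(i:=y, j:=t)" if "j \<in> I" for x j t y
    using that insert(2) by (auto simp: fun_eq_iff)
  have step3: "(\<integral>x. Ft x \<partial>PiM I M) * (\<integral>x. Gt x \<partial>PiM I M) \<le> (\<integral>x. Ft x * Gt x \<partial>PiM I M)"
  proof (rule insert.IH[OF Ftm Gtm Ftb Gtb])
    fix j x and s t :: real assume j: "j \<in> I" and x: "x \<in> space (PiM I M)" and st: "0 \<le> s" "s \<le> t"
    show "Ft (x(j := t)) \<le> Ft (x(j := s))" unfolding Ft_def
    proof (rule Bochner_Integration.integral_mono)
      show "integrable (M i) (\<lambda>y. F (x(j := t, i := y)))"
        by (rule int_bdd[OF P slicei[OF Fm spP[OF x j]]]) (rule insert.prems(3), rule spQ[OF spP[OF x j]])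
      show "integrable (M i) (\<lambda>y. F (x(j := s, i := y)))"
        by (rule int_bdd[OF P slicei[OF Fm spP[OF x j]]]) (rule insert.prems(3), rule spQ[OF spP[OF x j]])
      show "F (x(j := t, i := y)) \<le> F (x(j := s, i := y))" for y
        unfolding swap[OF j] by (rule insert.prems(5)[OF insertI2[OF j] spQ[OF x] st])
    qed
  next
    fix j x and s t :: real assume j: "j \<in> I" and x: "x \<in> space (PiM I M)" and st: "s \<le> t" "t \<le> 0"
    show "Ft (x(j := s)) \<le> Ft (x(j := t))" unfolding Ft_def
    proof (rule Bochner_Integration.integral_mono)
      show "integrable (M i) (\<lambda>y. F (x(j := t, i := y)))"
        by (rule int_bdd[OF P slicei[OF Fm spP[OF x j]]]) (rule insert.prems(3), rule spQ[OF spP[OF x j]])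
      show "integrable (M i) (\<lambda>y. F (x(j := s, i := y)))"
        by (rule int_bdd[OF P slicei[OF Fm spP[OF x j]]]) (rule insert.prems(3), rule spQ[OF spP[OF x j]])
      show "F (x(j := s, i := y)) \<le> F (x(j := t, i := y))" for y
        unfolding swap[OF j] by (rule insert.prems(6)[OF insertI2[OF j] spQ[OF x] st])
    qed
  next
    fix j x and t :: real assume j: "j \<in> I" and x: "x \<in> space (PiM I M)"
    show "Gt (x(j := - t)) = Gt (x(j := t))" unfolding Gt_def
      by (rule Bochner_Integration.integral_cong[OF refl])
         (unfold swap[OF j], rule insert.prems(7)[OF insertI2[OF j] spQ[OF x]])
  next
    fix j x and s t :: real assume j: "j \<in> I" and x: "x \<in> space (PiM I M)" and st: "0 \<le> s" "s \<le> t"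
    show "Gt (x(j := t)) \<le> Gt (x(j := s))" unfolding Gt_def
    proof (rule Bochner_Integration.integral_mono)
      show "integrable (M i) (\<lambda>y. G (x(j := t, i := y)))"
        by (rule int_bdd[OF P slicei[OF Gm spP[OF x j]]]) (rule insert.prems(4), rule spQ[OF spP[OF x j]])
      show "integrable (M i) (\<lambda>y. G (x(j := s, i := y)))"
        by (rule int_bdd[OF P slicei[OF Gm spP[OF x j]]]) (rule insert.prems(4), rule spQ[OF spP[OF x j]])
      show "G (x(j := t, i := y)) \<le> G (x(j := s, i := y))" for y
        unfolding swap[OF j] by (rule insert.prems(8)[OF insertI2[OF j] spQ[OF x] st])
    qed
  qed
  show ?case unfolding eF eG eH using step2 step3 by linarith
qed


lemma indicator_PiE_prod:
  assumes "finite I" "f \<in> extensional I"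
  shows "(indicator (PiE I A) f :: ennreal) = (\<Prod>b\<in>I. indicator (A b) (f b))"
proof (cases "\<forall>b\<in>I. f b \<in> A b")
  case True
  then show ?thesis using assms by (auto simp: indicator_def PiE_def Pi_def)
next
  case False
  then obtain b where "b \<in> I" "f b \<notin> A b" by auto
  then have "(\<Prod>b\<in>I. indicator (A b) (f b) :: ennreal) = 0"
    using assms(1) by (intro prod_zero) (auto intro!: bexI[of _ b])
  moreover have "f \<notin> PiE I A" using \<open>b \<in> I\<close> \<open>f b \<notin> A b\<close> by (auto simp: PiE_def)
  ultimately show ?thesis by simp
qed

lemma vec_bridge:
  fixes \<rho> :: "'n::finite \<Rightarrow> real \<Rightarrow> real"
  assumes rho_cont: "\<And>i. continuous_on {0..} (\<rho> i)"
    and rho_pos: "\<And>i t. t \<ge> 0 \<Longrightarrow> \<rho> i t > 0"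
    and rho_prob: "\<And>i. emeasure (density lborel (\<lambda>t. ennreal (\<rho> i \<bar>t\<bar>))) UNIV = 1"
  defines "M \<equiv> (\<lambda>b::real^'n. density lborel (\<lambda>t. ennreal (\<rho> (axis_index b) \<bar>t\<bar>)))"
  defines "\<Phi> \<equiv> (\<lambda>f. \<Sum>b\<in>Basis. f b *\<^sub>R b) :: (real^'n \<Rightarrow> real) \<Rightarrow> real^'n"
  shows "prod_meas \<rho> = distr (PiM Basis M) borel \<Phi>"
    and "\<And>b. prob_space (M b)" and "\<And>b. sets (M b) = sets borel"
    and "\<And>b. distr (M b) borel uminus = M b"
    and "\<Phi> \<in> measurable (PiM Basis M) borel"
    and "\<And>f i. \<Phi> f $ i = f (axis i 1)"
proof -
  have rc: "continuous_on UNIV (\<lambda>t. \<rho> k \<bar>t\<bar>)" for k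
    by (rule continuous_on_compose2[OF rho_cont[of k]]) (auto intro!: continuous_intros)
  have rm[measurable]: "(\<lambda>t. \<rho> k \<bar>t\<bar>) \<in> borel_measurable borel" for k
    using borel_measurable_continuous_onI[OF rc] .
  show sM: "sets (M b) = sets borel" for b by (simp add: M_def)
  show PM: "prob_space (M b)" for b
    by (rule prob_spaceI) (use rho_prob[of "axis_index b"] in \<open>simp add: M_def\<close>)
  show "distr (M b) borel uminus = M b" for b
  proof -
    let ?w = "\<lambda>t. ennreal (\<rho> (axis_index b) \<bar>t\<bar>)"
    have "M b = density (distr lborel borel uminus) ?w" by (simp add: M_def lborel_distr_uminus)
    also have "\<dots> = distr (density lborel (\<lambda>x. ?w (-x))) borel uminus"
      by (rule density_distr) auto
    also have "\<dots> = distr (M b) borel uminus" by (simp add: M_def)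
    finally show ?thesis by simp
  qed
  have Phim': "\<Phi> \<in> measurable (PiM Basis (\<lambda>_. lborel)) borel"
    unfolding \<Phi>_def by measurable
  have setsP: "sets (PiM Basis (\<lambda>_. lborel)) = sets (PiM Basis M)"
    by (rule sets_PiM_cong) (auto simp: sM)
  show Phim: "\<Phi> \<in> measurable (PiM Basis M) borel"
    using Phim' measurable_cong_sets[OF setsP refl] by blast
  show coord: "\<Phi> f $ i = f (axis i 1)" for f i
  proof -
    have "\<Phi> f $ i = (\<Sum>b\<in>Basis. f b * (b \<bullet> axis i 1))"
      unfolding \<Phi>_def cart_eq_inner_axis[of _ i] by (simp add: inner_sum_left)
    also have "\<dots> = (\<Sum>b\<in>Basis. if b = axis i 1 then f b else 0)"
      by (intro sum.cong refl) (auto simp: inner_Basis)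
    also have "\<dots> = f (axis i 1)" by (simp add: sum.delta')
    finally show ?thesis .
  qed
  have Beq: "(Basis :: (real^'n) set) = range (\<lambda>i. axis i 1)" by (auto simp: Basis_vec_def)
  have inj: "inj (\<lambda>i::'n. axis i (1::real))" by (auto simp: inj_def axis_eq_axis)
  have hh: "(\<Prod>i\<in>UNIV. \<rho> i \<bar>\<Phi> f $ i\<bar>) = (\<Prod>b\<in>Basis. \<rho> (axis_index b) \<bar>f b\<bar>)" for f
    unfolding Beq coord by (simp add: prod.reindex[OF inj])
  have hhm: "(\<lambda>x::real^'n. ennreal (\<Prod>i\<in>UNIV. \<rho> i \<bar>x $ i\<bar>)) \<in> borel_measurable borel"
  proof -
    have "(\<lambda>x::real^'n. \<rho> i \<bar>x $ i\<bar>) \<in> borel_measurable borel" for i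
      using measurable_compose[OF _ rm[of i], of "\<lambda>x::real^'n. x $ i" borel] by simp
    then show ?thesis by measurable
  qed
  have PSF: "product_sigma_finite M"
    unfolding product_sigma_finite_def using PM prob_space_imp_sigma_finite by blast
  have PSF': "product_sigma_finite (\<lambda>_::real^'n. lborel :: real measure)"
    unfolding product_sigma_finite_def by (simp add: sigma_finite_lborel)
  have dens: "density (PiM Basis (\<lambda>_. lborel)) (\<lambda>f. ennreal (\<Prod>i\<in>UNIV. \<rho> i \<bar>\<Phi> f $ i\<bar>)) = PiM Basis M"
  proof (rule product_sigma_finite.PiM_eqI[OF PSF finite_Basis])
    show "sets (density (PiM Basis (\<lambda>_. lborel)) (\<lambda>f. ennreal (\<Prod>i\<in>UNIV. \<rho> i \<bar>\<Phi> f $ i\<bar>))) = sets (PiM Basis M)"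
      using setsP by simp
    fix A assume A: "\<And>b. b \<in> Basis \<Longrightarrow> A b \<in> sets (M b)"
    have Ab: "A b \<in> sets borel" if "b \<in> Basis" for b using A[OF that] sM by simp
    have hm2: "(\<lambda>f. ennreal (\<Prod>i\<in>UNIV. \<rho> i \<bar>\<Phi> f $ i\<bar>)) \<in> borel_measurable (PiM Basis (\<lambda>_. lborel))"
      using measurable_compose[OF Phim' hhm] by simp
    have PiEs: "PiE Basis A \<in> sets (PiM Basis (\<lambda>_. lborel))"
      by (rule sets_PiM_I_finite) (use Ab in auto)
    have "emeasure (density (PiM Basis (\<lambda>_. lborel)) (\<lambda>f. ennreal (\<Prod>i\<in>UNIV. \<rho> i \<bar>\<Phi> f $ i\<bar>))) (PiE Basis A)
      = (\<integral>\<^sup>+ f. ennreal (\<Prod>i\<in>UNIV. \<rho> i \<bar>\<Phi> f $ i\<bar>) * indicator (PiE Basis A) f \<partial>PiM Basis (\<lambda>_. lborel))"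
      by (rule emeasure_density[OF hm2 PiEs])
    also have "\<dots> = (\<integral>\<^sup>+ f. (\<Prod>b\<in>Basis. ennreal (\<rho> (axis_index b) \<bar>f b\<bar>) * indicator (A b) (f b)) \<partial>PiM Basis (\<lambda>_. lborel))"
    proof (rule nn_integral_cong)
      fix f :: "real^'n \<Rightarrow> real" assume f: "f \<in> space (PiM Basis (\<lambda>_. lborel :: real measure))"
      then have fe: "f \<in> extensional Basis" by (simp add: space_PiM PiE_def)
      show "ennreal (\<Prod>i\<in>UNIV. \<rho> i \<bar>\<Phi> f $ i\<bar>) * indicator (PiE Basis A) f =
          (\<Prod>b\<in>Basis. ennreal (\<rho> (axis_index b) \<bar>f b\<bar>) * indicator (A b) (f b))"
        unfolding hh indicator_PiE_prod[OF finite_Basis fe] prod.distrib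
        by (simp add: prod_ennreal rho_pos less_imp_le)
    qed
    also have "\<dots> = (\<Prod>b\<in>Basis. \<integral>\<^sup>+ t. ennreal (\<rho> (axis_index b) \<bar>t\<bar>) * indicator (A b) t \<partial>lborel)"
      by (rule product_sigma_finite.product_nn_integral_prod[OF PSF' finite_Basis])
         (use Ab in \<open>auto\<close>)
    also have "\<dots> = (\<Prod>b\<in>Basis. emeasure (M b) (A b))"
      by (intro prod.cong refl) (simp add: M_def emeasure_density Ab)
    finally show "emeasure (density (PiM Basis (\<lambda>_. lborel)) (\<lambda>f. ennreal (\<Prod>i\<in>UNIV. \<rho> i \<bar>\<Phi> f $ i\<bar>))) (PiE Basis A)
      = (\<Prod>b\<in>Basis. emeasure (M b) (A b))" .
  qed
  have "prod_meas \<rho> = density (distr (PiM Basis (\<lambda>_. lborel)) borel \<Phi>) (\<lambda>x::real^'n. ennreal (\<Prod>i\<in>UNIV. \<rho> i \<bar>x $ i\<bar>))"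
    unfolding prod_meas_def \<Phi>_def by (subst lborel_eq) simp
  also have "\<dots> = distr (density (PiM Basis (\<lambda>_. lborel)) (\<lambda>f. ennreal (\<Prod>i\<in>UNIV. \<rho> i \<bar>\<Phi> f $ i\<bar>))) borel \<Phi>"
    by (rule density_distr[OF hhm Phim'])
  also have "\<dots> = distr (PiM Basis M) borel \<Phi>" by (simp add: dens)
  finally show "prod_meas \<rho> = distr (PiM Basis M) borel \<Phi>" .
qed

lemma C1_mono:
  assumes g: "g \<in> C1" and st: "(0 \<le> s \<and> s \<le> t) \<or> (t \<le> s \<and> s \<le> 0)"
  shows "g t \<le> g s"
proof (rule ccontr)
  assume "\<not> g t \<le> g s"
  then have lt: "g s < g t" by simp
  have nn: "\<And>u. 0 \<le> g u" and top: "\<And>u. g u \<le> g 0" and cv: "\<And>c. c > 0 \<Longrightarrow> convex {u. g u > c}"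
    using g by (auto simp: C1_def)
  define c where "c = (g s + g t) / 2"
  have c0: "c > 0" using nn[of s] lt by (simp add: c_def)
  have tS: "t \<in> {u. g u > c}" using lt by (simp add: c_def)
  have zS: "0 \<in> {u. g u > c}" using lt top[of t] by (simp add: c_def)
  have t0: "t \<noteq> 0" using st lt by auto
  define u where "u = s / t"
  have u0: "0 \<le> u" "u \<le> 1" using st t0 by (auto simp: u_def divide_simps)
  have "u *\<^sub>R t + (1 - u) *\<^sub>R 0 \<in> {u. g u > c}"
    by (rule convexD[OF cv[OF c0] tS zS]) (use u0 in auto)
  moreover have "u * t + (1 - u) * 0 = s" using t0 by (simp add: u_def)
  ultimately have "g s > c" by simp
  then show False using lt by (simp add: c_def)
qed

lemma upd_Phi:
  fixes x :: "real^'n \<Rightarrow> real"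
  assumes b: "b \<in> Basis"
  shows "(\<Sum>c\<in>Basis. (x(b:=t)) c *\<^sub>R c) = upd_coord (\<Sum>c\<in>Basis. x c *\<^sub>R c) (axis_index b) t"
proof -
  have coord: "(\<Sum>c\<in>Basis. f c *\<^sub>R c) $ i = f (axis i 1)" for f :: "real^'n \<Rightarrow> real" and i
  proof -
    have "(\<Sum>c\<in>Basis. f c *\<^sub>R c) $ i = (\<Sum>c\<in>Basis. f c * (c \<bullet> axis i 1))"
      unfolding cart_eq_inner_axis[of _ i] by (simp add: inner_sum_left)
    also have "\<dots> = (\<Sum>c\<in>Basis. if c = axis i 1 then f c else 0)"
      by (intro sum.cong refl) (auto simp: inner_Basis)
    also have "\<dots> = f (axis i 1)" by (simp add: sum.delta')
    finally show ?thesis .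
  qed
  have bb: "b = axis (axis_index b) 1" using axis_index[OF b] .
  have iff: "axis k 1 = b \<longleftrightarrow> k = axis_index b" for k
    by (subst bb) (auto simp: axis_eq_axis)
  have "(\<Sum>c\<in>Basis. (x(b:=t)) c *\<^sub>R c) $ k = upd_coord (\<Sum>c\<in>Basis. x c *\<^sub>R c) (axis_index b) t $ k" for k
    unfolding coord upd_coord_def by (simp add: iff)
  then show ?thesis unfolding vec_eq_iff by blast
qed

lemma f_bounded:
  fixes f :: "'a::euclidean_space \<Rightarrow> real"
  assumes c: "continuous_on UNIV f" and k: "compact (closure {x. f x \<noteq> 0})"
  shows "\<exists>C. \<forall>x. \<bar>f x\<bar> \<le> C"
proof -
  let ?K = "closure {x. f x \<noteq> 0}"
  have "compact (f ` ?K)" by (rule compact_continuous_image[OF continuous_on_subset[OF c] k]) auto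
  then have "bounded (f ` ?K)" by (rule compact_imp_bounded)
  then obtain C where C: "\<And>y. y \<in> f ` ?K \<Longrightarrow> norm y \<le> C"
    unfolding bounded_iff by blast
  have "\<bar>f x\<bar> \<le> \<bar>C\<bar>" for x
  proof (cases "x \<in> ?K")
    case True then show ?thesis using C[of "f x"] by auto
  next
    case False
    have "x \<notin> {x. f x \<noteq> 0}" by (rule contra_subsetD[OF closure_subset False])
    then have "f x = 0" by simp
    then show ?thesis by simp
  qed
  then show ?thesis by blast
qed

theorem theorem3p1:
  fixes \<rho> :: "'n::finite \<Rightarrow> real \<Rightarrow> real" and a :: "'n \<Rightarrow> real" and f :: "real^'n \<Rightarrow> real"
  assumes rho_cont: "\<And>i. continuous_on {0..} (\<rho> i)"
    and rho_pos: "\<And>i t. t \<ge> 0 \<Longrightarrow> \<rho> i t > 0"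
    and rho_prob: "\<And>i. emeasure (density lborel (\<lambda>t. ennreal (\<rho> i \<bar>t\<bar>))) UNIV = 1"
    and a_pos: "\<And>i. a i > 0"
    and f_in: "f \<in> Cbar"
  shows "(\<integral>x. f x * indicator (ellipsoid a) x \<partial>prod_meas \<rho>)
           \<ge> (\<integral>x. f x \<partial>prod_meas \<rho>) * measure (prod_meas \<rho>) (ellipsoid a)"
proof -
  define M where "M \<equiv> (\<lambda>b::real^'n. density lborel (\<lambda>t. ennreal (\<rho> (axis_index b) \<bar>t\<bar>)))"
  define \<Phi> where "\<Phi> \<equiv> (\<lambda>f. \<Sum>b\<in>Basis. f b *\<^sub>R b) :: (real^'n \<Rightarrow> real) \<Rightarrow> real^'n"
  note vb = vec_bridge[OF rho_cont rho_pos rho_prob]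
  have PM: "\<And>b. prob_space (M b)" unfolding M_def by (rule vb(2))
  have sM: "\<And>b. sets (M b) = sets borel" unfolding M_def by (rule vb(3))
  have sym: "\<And>b. distr (M b) borel uminus = M b" unfolding M_def by (rule vb(4))
  have Phim: "\<Phi> \<in> measurable (PiM Basis M) borel" unfolding M_def \<Phi>_def by (rule vb(5))
  have peq: "prod_meas \<rho> = distr (PiM Basis M) borel \<Phi>" unfolding M_def \<Phi>_def by (rule vb(1))
  let ?E = "ellipsoid a"
  let ?N = "PiM Basis M"
  have fc: "continuous_on UNIV f" and fk: "compact (closure {x. f x \<noteq> 0})"
    and fnn: "\<And>x. 0 \<le> f x" and fC1: "\<And>i x. (\<lambda>t. f (upd_coord x i t)) \<in> C1"
    using f_in by (auto simp: Cbar_def)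
  obtain Cf where Cf: "\<And>x. \<bar>f x\<bar> \<le> Cf" using f_bounded[OF fc fk] by blast
  have fm: "f \<in> borel_measurable borel" using borel_measurable_continuous_onI[OF fc] .
  have Eclosed: "closed ?E"
  proof -
    have an: "(a i)^2 \<noteq> 0" for i using a_pos[of i] by simp
    have an': "a i \<noteq> 0" for i using a_pos[of i] by simp
    show ?thesis unfolding ellipsoid_def by (intro closed_Collect_le continuous_intros) (simp add: an an')
  qed
  have Em: "?E \<in> sets borel" using borel_closed[OF Eclosed] .
  have indm: "(indicator ?E :: real^'n \<Rightarrow> real) \<in> borel_measurable borel"
    using Em by (rule borel_measurable_indicator)
  have PN: "prob_space ?N" by (rule prob_space_PiM) (use PM in auto)
  define F where "F x = f (\<Phi> x)" for x
  define G where "G x = (indicator ?E (\<Phi> x) :: real)" for x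
  have Fm: "F \<in> borel_measurable ?N" unfolding F_def using measurable_compose[OF Phim fm] .
  have Gm: "G \<in> borel_measurable ?N" unfolding G_def using measurable_compose[OF Phim indm] .
  have upd: "\<Phi> (x(b:=t)) = upd_coord (\<Phi> x) (axis_index b) t" if "b \<in> Basis" for x b t
    unfolding \<Phi>_def by (rule upd_Phi[OF that])
  have Esum: "upd_coord y i t \<in> ?E \<longleftrightarrow> t^2 / (a i)^2 + (\<Sum>k\<in>UNIV-{i}. (y $ k)^2 / (a k)^2) \<le> 1" for y i t
  proof -
    have "(\<Sum>k\<in>UNIV. (upd_coord y i t $ k)^2 / (a k)^2) = t^2 / (a i)^2 + (\<Sum>k\<in>UNIV-{i}. (upd_coord y i t $ k)^2 / (a k)^2)"
      by (subst sum.remove[of _ i]) (auto simp: upd_coord_def)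
    also have "(\<Sum>k\<in>UNIV-{i}. (upd_coord y i t $ k)^2 / (a k)^2) = (\<Sum>k\<in>UNIV-{i}. (y $ k)^2 / (a k)^2)"
      by (intro sum.cong refl) (auto simp: upd_coord_def)
    finally show ?thesis by (simp add: ellipsoid_def)
  qed
  have harr: "(\<integral>x. F x \<partial>?N) * (\<integral>x. G x \<partial>?N) \<le> (\<integral>x. F x * G x \<partial>?N)"
  proof (rule harris[OF PM sM sym finite_Basis Fm Gm])
    show "\<bar>F x\<bar> \<le> Cf" for x unfolding F_def by (rule Cf)
    show "\<bar>G x\<bar> \<le> 1" for x unfolding G_def by (simp split: split_indicator)
    fix b :: "real^'n" and x :: "real^'n \<Rightarrow> real" and s t :: real assume b: "b \<in> Basis"
    show "0 \<le> s \<Longrightarrow> s \<le> t \<Longrightarrow> F (x(b := t)) \<le> F (x(b := s))"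
      unfolding F_def upd[OF b] using C1_mono[OF fC1, of s t] by auto
    show "s \<le> t \<Longrightarrow> t \<le> 0 \<Longrightarrow> F (x(b := s)) \<le> F (x(b := t))"
      unfolding F_def upd[OF b] using C1_mono[OF fC1, of t s] by auto
    show "G (x(b := - t)) = G (x(b := t))"
      unfolding G_def upd[OF b] indicator_def using Esum by simp
    show "0 \<le> s \<Longrightarrow> s \<le> t \<Longrightarrow> G (x(b := t)) \<le> G (x(b := s))"
    proof -
      assume st: "0 \<le> s" "s \<le> t"
      have "s^2 / (a (axis_index b))^2 \<le> t^2 / (a (axis_index b))^2"
        using st by (intro divide_right_mono power_mono) auto
      then show ?thesis unfolding G_def upd[OF b] indicator_def using Esum by auto
    qed
  qed
  have PD: "prob_space (prod_meas \<rho>)" unfolding peq by (rule prob_space.prob_space_distr[OF PN Phim])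
  have Epm: "?E \<in> sets (prod_meas \<rho>)" using Em by (simp add: prod_meas_def)
  have e1: "(\<integral>x. f x \<partial>prod_meas \<rho>) = (\<integral>x. F x \<partial>?N)"
    unfolding peq F_def by (rule integral_distr[OF Phim fm])
  have e2: "(\<integral>x. f x * indicator ?E x \<partial>prod_meas \<rho>) = (\<integral>x. F x * G x \<partial>?N)"
    unfolding peq F_def G_def by (rule integral_distr[OF Phim]) (use fm indm in measurable)
  have e3: "measure (prod_meas \<rho>) ?E = (\<integral>x. G x \<partial>?N)"
  proof -
    have "measure (prod_meas \<rho>) ?E = (\<integral>x. indicator ?E x \<partial>prod_meas \<rho>)"
      by (simp add: prod_meas_def)
    also have "\<dots> = (\<integral>x. G x \<partial>?N)"
      unfolding peq G_def by (rule integral_distr[OF Phim indm])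
    finally show ?thesis .
  qed
  show ?thesis using harr unfolding e1 e2 e3 by simp
qed

end
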